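(* Let $\mathbb B$ be a real separable Banach space and $(X_i)_{i\in\mathbb Z}$ a stationary sequence of centered $\mathbb B$-valued random variables with $\mathbb E\|X_0\|_{\mathbb B}^2<\infty$, adapted to a non-decreasing stationary filtration $(\mathcal F_i)$, with $S_n=X_1+\dots+X_n$. Assume (a) $\sum_{k\ge1}\gamma(k)<\infty$; (b) $n^{-1/2}S_n$ converges in distribution to a Gaussian $\mathbb B$-valued $G$ with covariance operator $K_G(x^*,y^* )=\sum_{k\in\mathbb Z}\mathrm{cov}(x^*(X_0),y^*(X_k))$; (c) $(\|S_n\|_{\mathbb B}^2/n)_{n\ge1}$ is uniformly integrable. Then for every symmetric continuous bilinear form $\varphi$ on $\mathbb B\times\mathbb B$, $$\mathbb E[\varphi(G,G)]=\mathbb E[\varphi(X_0,X_0)]+2\sum_{k\ge1}\mathbb E[\varphi(X_0,X_k)].$$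
   Context: $\gamma(k)=\mathbb E\big(\sup_A|\mathbb E[A(X_0,X_k)\mid\mathcal F_0]|\big)$, the supremum being over all continuous bilinear forms $A$ on $\mathbb B\times\mathbb B$ with $\|A\|\le1$. *)

theory Defs
  imports "HOL-Probability.Probability"
begin

definition cont_bilinear_form :: "('b::real_normed_vector \<Rightarrow> 'b \<Rightarrow> real) \<Rightarrow> bool" where
  "cont_bilinear_form A \<longleftrightarrow> bounded_bilinear A"

definition bilin_norm_le1 :: "('b::real_normed_vector \<Rightarrow> 'b \<Rightarrow> real) \<Rightarrow> bool" where
  "bilin_norm_le1 A \<longleftrightarrow> cont_bilinear_form A \<and> (\<forall>x y. \<bar>A x y\<bar> \<le> norm x * norm y)"

definition Tpow :: "'a measure \<Rightarrow> ('a \<Rightarrow> 'a) \<Rightarrow> int \<Rightarrow> 'a \<Rightarrow> 'a" where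
  "Tpow M T i = (if 0 \<le> i then T ^^ nat i else (inv_into (space M) T) ^^ nat (- i))"

text \<open>gamma(k) = E( sup_A |E[A(X_0,X_k) | F_0]| ), the supremum over the (uncountable) family
  of continuous bilinear forms of norm \<le> 1 being understood as the essential supremum;
  E(ess sup) is the infimum of E(Y) over measurable Y dominating every member a.s.\<close>
definition gamma_coef :: "'a measure \<Rightarrow> 'a measure \<Rightarrow> (int \<Rightarrow> 'a \<Rightarrow> 'b::real_normed_vector) \<Rightarrow> int \<Rightarrow> ennreal" where
  "gamma_coef M F0 X k =
     (INF Y \<in> {Y \<in> borel_measurable M. \<forall>A. bilin_norm_le1 A \<longrightarrow>
               (AE \<omega> in M. ennreal \<bar>real_cond_exp M F0 (\<lambda>\<omega>. A (X 0 \<omega>) (X k \<omega>)) \<omega>\<bar> \<le> Y \<omega>)}.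
        \<integral>\<^sup>+ \<omega>. Y \<omega> \<partial>M)"

definition conv_in_distr :: "'a measure \<Rightarrow> (nat \<Rightarrow> 'a \<Rightarrow> 'b::metric_space) \<Rightarrow> 'b measure \<Rightarrow> bool" where
  "conv_in_distr M Z mu \<longleftrightarrow>
     (\<forall>f :: 'b \<Rightarrow> real. continuous_on UNIV f \<longrightarrow> bounded (range f) \<longrightarrow>
        ((\<lambda>n. \<integral>\<omega>. f (Z n \<omega>) \<partial>M) \<longlonglongrightarrow> (\<integral>x. f x \<partial>mu)))"

definition unif_integrable :: "'a measure \<Rightarrow> (nat \<Rightarrow> 'a \<Rightarrow> real) \<Rightarrow> bool" where
  "unif_integrable M Y \<longleftrightarrow> (\<forall>n. integrable M (Y n)) \<and>
     ((\<lambda>c. SUP n. \<integral>\<^sup>+ \<omega>. ennreal (indicator {\<omega>. \<bar>Y n \<omega>\<bar> > c} \<omega> * \<bar>Y n \<omega>\<bar>) \<partial>M)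
        \<longlongrightarrow> 0) at_top"

text \<open>Gaussian (Borel) probability measure on a real normed space: every continuous linear functional
  has a (possibly degenerate) normal law.\<close>
definition gaussian_measure :: "'b::real_normed_vector measure \<Rightarrow> bool" where
  "gaussian_measure mu \<longleftrightarrow> prob_space mu \<and> sets mu = sets borel \<and>
     (\<forall>f :: 'b \<Rightarrow> real. bounded_linear f \<longrightarrow>
        (\<exists>m. distr mu borel f = return borel m) \<or>
        (\<exists>m \<sigma>. \<sigma> > 0 \<and> distr mu borel f = density lborel (normal_density m \<sigma>)))"

end

theory Submission
  imports Defs
begin



lemma funpow_meas: "T \<in> M \<rightarrow>\<^sub>M M \<Longrightarrow> (T ^^ n) \<in> M \<rightarrow>\<^sub>M M"
  by (induction n) (auto intro: measurable_comp measurable_ident_sets)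

lemma funpow_distr:
  assumes "T \<in> M \<rightarrow>\<^sub>M M" "distr M M T = M"
  shows "distr M M (T ^^ n) = M"
proof (induction n)
  case 0
  then show ?case by (simp add: distr_id2 id_def)
next
  case (Suc n)
  have "distr M M (T ^^ Suc n) = distr M M (T \<circ> T ^^ n)" by simp
  also have "\<dots> = distr (distr M M (T ^^ n)) M T"
    by (rule distr_distr[symmetric]) (use assms funpow_meas in auto)
  also have "\<dots> = M" using Suc assms by simp
  finally show ?case .
qed

lemma integral_funpow:
  fixes g :: "'a \<Rightarrow> 'b::{banach, second_countable_topology}"
  assumes "T \<in> M \<rightarrow>\<^sub>M M" "distr M M T = M" "g \<in> borel_measurable M"
  shows "(\<integral>x. g ((T ^^ n) x) \<partial>M) = (\<integral>x. g x \<partial>M)"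
    and "integrable M (\<lambda>x. g ((T ^^ n) x)) \<longleftrightarrow> integrable M g"
proof -
  have m: "(T ^^ n) \<in> M \<rightarrow>\<^sub>M M" by (rule funpow_meas[OF assms(1)])
  show "(\<integral>x. g ((T ^^ n) x) \<partial>M) = (\<integral>x. g x \<partial>M)"
    using integral_distr[OF m assms(3)] funpow_distr[OF assms(1,2)] by simp
  show "integrable M (\<lambda>x. g ((T ^^ n) x)) \<longleftrightarrow> integrable M g"
    using integrable_distr_eq[OF m assms(3)] funpow_distr[OF assms(1,2)] by simp
qed



lemma wc:
  fixes Z :: "nat \<Rightarrow> 'a \<Rightarrow> 'b::{banach, second_countable_topology}" and q :: "'b \<Rightarrow> real"
  assumes M: "prob_space M" and mu: "prob_space mu" and smu: "sets mu = sets borel"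
    and Zm: "\<And>n. Z n \<in> borel_measurable M"
    and conv: "\<forall>f::'b\<Rightarrow>real. continuous_on UNIV f \<longrightarrow> bounded (range f) \<longrightarrow>
        ((\<lambda>n. \<integral>\<omega>. f (Z n \<omega>) \<partial>M) \<longlonglongrightarrow> (\<integral>x. f x \<partial>mu))"
    and UI: "unif_integrable M (\<lambda>n \<omega>. (norm (Z n \<omega>))\<^sup>2)"
    and qc: "continuous_on UNIV q" and qb: "\<And>x. \<bar>q x\<bar> \<le> K * (norm x)\<^sup>2" and K: "K > 0"
  shows "(\<lambda>n. \<integral>\<omega>. q (Z n \<omega>) \<partial>M) \<longlonglongrightarrow> (\<integral>x. q x \<partial>mu)"
proof -
  interpret M: prob_space M by fact
  interpret mu: prob_space mu by fact
  define W where "W = (\<lambda>n \<omega>. (norm (Z n \<omega>))\<^sup>2)"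
  have Wm[measurable]: "W n \<in> borel_measurable M" for n unfolding W_def using Zm[of n] by measurable
  have Wi: "integrable M (W n)" for n using UI unfolding unif_integrable_def W_def by auto
  have Wnn: "W n \<omega> \<ge> 0" for n \<omega> unfolding W_def by simp
  have lim0: "((\<lambda>c. SUP n. \<integral>\<^sup>+ \<omega>. ennreal (indicator {\<omega>. \<bar>W n \<omega>\<bar> > c} \<omega> * \<bar>W n \<omega>\<bar>) \<partial>M) \<longlongrightarrow> 0) at_top"
    using UI unfolding unif_integrable_def W_def by auto
  define tl where "tl = (\<lambda>n c. \<integral>\<omega>. indicator {\<omega>. c < W n \<omega>} \<omega> * W n \<omega> \<partial>M)"
  have tli: "integrable M (\<lambda>\<omega>. indicator {\<omega>. c < W n \<omega>} \<omega> * W n \<omega>)" for n c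
    by (rule Bochner_Integration.integrable_bound[OF Wi[of n]]) (auto simp: indicator_def Wnn)
  have tail: "\<exists>c0. \<forall>c\<ge>c0. \<forall>n. tl n c < e" if e: "e > 0" for e
  proof -
    have "eventually (\<lambda>c. (SUP n. \<integral>\<^sup>+ \<omega>. ennreal (indicator {\<omega>. \<bar>W n \<omega>\<bar> > c} \<omega> * \<bar>W n \<omega>\<bar>) \<partial>M) < ennreal e) at_top"
      using lim0 e by (intro order_tendstoD(2)) auto
    then obtain c0 where c0: "\<And>c. c \<ge> c0 \<Longrightarrow> (SUP n. \<integral>\<^sup>+ \<omega>. ennreal (indicator {\<omega>. \<bar>W n \<omega>\<bar> > c} \<omega> * \<bar>W n \<omega>\<bar>) \<partial>M) < ennreal e"
      unfolding eventually_at_top_linorder by blast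
    have "tl n c < e" if "c \<ge> c0" for c n
    proof -
      have "ennreal (tl n c) = (\<integral>\<^sup>+ \<omega>. ennreal (indicator {\<omega>. \<bar>W n \<omega>\<bar> > c} \<omega> * \<bar>W n \<omega>\<bar>) \<partial>M)"
      proof -
        have eq: "(\<lambda>\<omega>. indicator {\<omega>. \<bar>W n \<omega>\<bar> > c} \<omega> * \<bar>W n \<omega>\<bar>) = (\<lambda>\<omega>. indicator {\<omega>. c < W n \<omega>} \<omega> * W n \<omega>)"
          using Wnn by (simp add: abs_of_nonneg)
        show ?thesis unfolding tl_def abs_of_nonneg[OF Wnn]
          by (rule nn_integral_eq_integral[OF tli, symmetric]) (auto simp: indicator_def Wnn)
      qed
      also have "\<dots> \<le> (SUP n. \<integral>\<^sup>+ \<omega>. ennreal (indicator {\<omega>. \<bar>W n \<omega>\<bar> > c} \<omega> * \<bar>W n \<omega>\<bar>) \<partial>M)"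
        by (rule SUP_upper) auto
      also have "\<dots> < ennreal e" using c0 that by blast
      finally show ?thesis using e by (cases "tl n c < 0") (auto simp: ennreal_less_iff)
    qed
    then show ?thesis by blast
  qed
  obtain c1 where c1: "\<And>c n. c \<ge> c1 \<Longrightarrow> tl n c < 1" using tail[of 1] by auto
  define B where "B = max c1 0 + 1"
  have WB: "integral\<^sup>L M (W n) \<le> B" for n
  proof -
    have "integral\<^sup>L M (W n) \<le> (\<integral>\<omega>. max c1 0 + indicator {\<omega>. max c1 0 < W n \<omega>} \<omega> * W n \<omega> \<partial>M)"
      by (intro integral_mono Wi Bochner_Integration.integrable_add tli) (auto simp: indicator_def)
    also have "\<dots> = max c1 0 + tl n (max c1 0)" unfolding tl_def
      by (subst Bochner_Integration.integral_add) (auto intro!: tli simp: M.prob_space simp del: max_less_iff_conj)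
    also have "\<dots> \<le> B" using c1[of "max c1 0" n] unfolding B_def by simp
    finally show ?thesis .
  qed
  have Zm'[measurable]: "Z n \<in> borel_measurable M" for n by (rule Zm)
  have qm[measurable]: "q \<in> borel_measurable borel" by (rule borel_measurable_continuous_onI[OF qc])
  have qmu[measurable]: "q \<in> borel_measurable mu" using qm measurable_cong_sets[OF smu refl] by blast
  have nm: "(\<lambda>x::'b. (norm x)\<^sup>2) \<in> borel_measurable mu"
    using measurable_cong_sets[OF smu refl] by (metis borel_measurable_norm borel_measurable_power measurable_ident_sets)
  define g where "g = (\<lambda>(m::nat) (x::'b). min ((norm x)\<^sup>2) (real m))"
  have gc: "continuous_on UNIV (g m)" for m unfolding g_def by (intro continuous_intros)
  have gb: "bounded (range (g m))" for m unfolding g_def bounded_iff by (intro exI[of _ "real m"]) auto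
  have gmu: "integrable mu (g m)" for m
    apply (rule mu.integrable_const_bound[where B="real m"])
     apply (auto simp: g_def)
    using nm by measurable
  have gle: "integral\<^sup>L mu (g m) \<le> B" for m
  proof (rule LIMSEQ_le_const2)
    show "(\<lambda>n. \<integral>\<omega>. g m (Z n \<omega>) \<partial>M) \<longlonglongrightarrow> integral\<^sup>L mu (g m)" using conv gc gb by blast
    show "\<exists>N. \<forall>n\<ge>N. (\<integral>\<omega>. g m (Z n \<omega>) \<partial>M) \<le> B"
    proof (intro exI allI impI)
      fix n
      have "(\<integral>\<omega>. g m (Z n \<omega>) \<partial>M) \<le> integral\<^sup>L M (W n)"
        by (rule integral_mono'[OF Wi]) (auto simp: g_def W_def)
      then show "(\<integral>\<omega>. g m (Z n \<omega>) \<partial>M) \<le> B" using WB[of n] by linarith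
    qed
  qed
  have n2i: "integrable mu (\<lambda>x. (norm x)\<^sup>2)"
  proof (rule integrable_monotone_convergence[OF gmu])
    show "AE x in mu. mono (\<lambda>n. g n x)" by (auto simp: g_def mono_def)
    show "AE x in mu. (\<lambda>i. g i x) \<longlonglongrightarrow> (norm x)\<^sup>2"
    proof (rule AE_I2, rule tendsto_eventually)
      fix x :: 'b
      show "\<forall>\<^sub>F i in sequentially. g i x = (norm x)\<^sup>2"
        unfolding eventually_sequentially g_def
      proof (intro exI[of _ "nat \<lceil>(norm x)\<^sup>2\<rceil>"] allI impI)
        fix n assume "nat \<lceil>(norm x)\<^sup>2\<rceil> \<le> n"
        then have "real (nat \<lceil>(norm x)\<^sup>2\<rceil>) \<le> real n" by (simp only: of_nat_le_iff)
        then show "min ((norm x)\<^sup>2) (real n) = (norm x)\<^sup>2"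
          using real_nat_ceiling_ge[of "(norm x)\<^sup>2"] by linarith
      qed
    qed
    have inc: "incseq (\<lambda>i. integral\<^sup>L mu (g i))"
      by (auto simp: incseq_def g_def intro!: integral_mono gmu[unfolded g_def])
    show "(\<lambda>i. integral\<^sup>L mu (g i)) \<longlonglongrightarrow> (SUP i. integral\<^sup>L mu (g i))"
      by (rule LIMSEQ_incseq_SUP[OF _ inc]) (use gle in \<open>auto intro!: bdd_aboveI[of _ B]\<close>)
    show "(\<lambda>x. (norm x)\<^sup>2) \<in> borel_measurable mu" by (rule nm)
  qed
  have qi: "integrable mu q"
    by (rule Bochner_Integration.integrable_bound[OF integrable_mult_right[OF n2i, of K] qmu])
       (use qb K in \<open>auto intro!: AE_I2 simp: abs_mult\<close>)
  define h where "h = (\<lambda>(m::nat) x. max (- real m) (min (real m) (q x)))"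
  have hc: "continuous_on UNIV (h m)" for m
    unfolding h_def by (rule continuous_on_max[OF continuous_on_const continuous_on_min[OF continuous_on_const qc]])
  have hb: "bounded (range (h m))" for m unfolding h_def bounded_iff
    by (intro exI[of _ "real m"]) auto
  have hm[measurable]: "h m \<in> borel_measurable borel" for m by (rule borel_measurable_continuous_onI[OF hc])
  have hmu: "(\<lambda>m. integral\<^sup>L mu (h m)) \<longlonglongrightarrow> integral\<^sup>L mu q"
  proof (rule integral_dominated_convergence[where w="\<lambda>x. \<bar>q x\<bar>"])
    show "q \<in> borel_measurable mu" by (rule qmu)
    show "h i \<in> borel_measurable mu" for i using hm measurable_cong_sets[OF smu refl] by blast
    show "integrable mu (\<lambda>x. \<bar>q x\<bar>)" using qi by auto
    show "AE x in mu. (\<lambda>i. h i x) \<longlonglongrightarrow> q x"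
    proof (rule AE_I2, rule tendsto_eventually)
      fix x :: 'b
      show "\<forall>\<^sub>F i in sequentially. h i x = q x"
        unfolding eventually_sequentially
      proof (intro exI[of _ "nat \<lceil>\<bar>q x\<bar>\<rceil>"] allI impI)
        fix n assume "nat \<lceil>\<bar>q x\<bar>\<rceil> \<le> n"
        then have "real (nat \<lceil>\<bar>q x\<bar>\<rceil>) \<le> real n" by (simp only: of_nat_le_iff)
        then show "h n x = q x"
          using real_nat_ceiling_ge[of "\<bar>q x\<bar>"] unfolding h_def by linarith
      qed
    qed
    show "AE x in mu. norm (h i x) \<le> \<bar>q x\<bar>" for i by (rule AE_I2) (auto simp: h_def)
  qed
  have hdiff: "\<bar>q z - h m z\<bar> \<le> K * (indicator {z. real m / K < (norm z)\<^sup>2} z * (norm z)\<^sup>2)" for z m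
  proof (cases "\<bar>q z\<bar> \<le> real m")
    case True
    then have "h m z = q z" unfolding h_def by linarith
    then show ?thesis using K by (simp add: indicator_def)
  next
    case False
    have le: "\<bar>q z - h m z\<bar> \<le> \<bar>q z\<bar>" using False unfolding h_def by linarith
    have "real m < K * (norm z)\<^sup>2" using False qb[of z] by linarith
    then have "real m / K < (norm z)\<^sup>2" using K by (simp add: divide_less_eq mult.commute)
    then show ?thesis using le qb[of z] by (simp add: indicator_def)
  qed
  have qZm[measurable]: "(\<lambda>\<omega>. q (Z n \<omega>)) \<in> borel_measurable M" for n by measurable
  have qZi: "integrable M (\<lambda>\<omega>. q (Z n \<omega>))" for n
    by (rule Bochner_Integration.integrable_bound[OF integrable_mult_right[OF Wi[of n], of K] qZm])
       (use qb K in \<open>auto intro!: AE_I2 simp: abs_mult W_def\<close>)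
  have hZi: "integrable M (\<lambda>\<omega>. h m (Z n \<omega>))" for n m
    by (rule M.integrable_const_bound[where B="real m"]) (auto simp: h_def)
  show ?thesis
  proof (rule LIMSEQ_I)
    fix r :: real assume r: "r > 0"
    obtain c0 where c0: "\<And>c n. c \<ge> c0 \<Longrightarrow> tl n c < r / (3 * K)"
      using tail[of "r / (3 * K)"] r K by auto
    have "eventually (\<lambda>m. dist (integral\<^sup>L mu (h m)) (integral\<^sup>L mu q) < r / 3) sequentially"
      using hmu r by (intro tendstoD) auto
    then obtain N where N: "\<And>m. m \<ge> N \<Longrightarrow> \<bar>integral\<^sup>L mu (h m) - integral\<^sup>L mu q\<bar> < r / 3"
      unfolding eventually_sequentially dist_real_def by blast
    define m where "m = max N (nat \<lceil>K * c0\<rceil>)"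
    have m1: "\<bar>integral\<^sup>L mu (h m) - integral\<^sup>L mu q\<bar> < r / 3" using N m_def by auto
    have "real (nat \<lceil>K * c0\<rceil>) \<le> real m" unfolding m_def by (simp only: of_nat_le_iff)
    then have "K * c0 \<le> real m" using real_nat_ceiling_ge[of "K * c0"] by linarith
    then have m2: "c0 \<le> real m / K" using K by (simp add: le_divide_eq mult.commute)
    have "eventually (\<lambda>n. dist (\<integral>\<omega>. h m (Z n \<omega>) \<partial>M) (integral\<^sup>L mu (h m)) < r / 3) sequentially"
      using conv hc hb r by (intro tendstoD) auto
    then obtain N2 where N2: "\<And>n. n \<ge> N2 \<Longrightarrow> \<bar>(\<integral>\<omega>. h m (Z n \<omega>) \<partial>M) - integral\<^sup>L mu (h m)\<bar> < r / 3"
      unfolding eventually_sequentially dist_real_def by blast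
    show "\<exists>no. \<forall>n\<ge>no. norm ((\<integral>\<omega>. q (Z n \<omega>) \<partial>M) - integral\<^sup>L mu q) < r"
    proof (intro exI allI impI)
      fix n assume n: "n \<ge> N2"
      have "\<bar>(\<integral>\<omega>. q (Z n \<omega>) \<partial>M) - (\<integral>\<omega>. h m (Z n \<omega>) \<partial>M)\<bar>
          = \<bar>\<integral>\<omega>. q (Z n \<omega>) - h m (Z n \<omega>) \<partial>M\<bar>"
        by (subst Bochner_Integration.integral_diff[OF qZi hZi]) rule
      also have "\<dots> \<le> (\<integral>\<omega>. K * (indicator {\<omega>. real m / K < W n \<omega>} \<omega> * W n \<omega>) \<partial>M)"
      proof (rule order_trans[OF integral_abs_bound], rule integral_mono)
        show "integrable M (\<lambda>\<omega>. \<bar>q (Z n \<omega>) - h m (Z n \<omega>)\<bar>)" using qZi hZi by auto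
        show "integrable M (\<lambda>\<omega>. K * (indicator {\<omega>. real m / K < W n \<omega>} \<omega> * W n \<omega>))"
          using tli by auto
        show "\<bar>q (Z n \<omega>) - h m (Z n \<omega>)\<bar> \<le> K * (indicator {\<omega>. real m / K < W n \<omega>} \<omega> * W n \<omega>)" for \<omega>
          using hdiff[of "Z n \<omega>" m] by (simp add: W_def indicator_def)
      qed
      also have "\<dots> = K * tl n (real m / K)" unfolding tl_def by simp
      also have "\<dots> < K * (r / (3 * K))" using c0[OF m2, of n] K by (intro mult_strict_left_mono) auto
      also have "\<dots> = r / 3" using K by simp
      finally have a: "\<bar>(\<integral>\<omega>. q (Z n \<omega>) \<partial>M) - (\<integral>\<omega>. h m (Z n \<omega>) \<partial>M)\<bar> < r / 3" .
      show "norm ((\<integral>\<omega>. q (Z n \<omega>) \<partial>M) - integral\<^sup>L mu q) < r"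
        using a m1 N2[OF n] unfolding real_norm_def by linarith
    qed
  qed
qed


lemma cesaro0:
  fixes t :: "nat \<Rightarrow> real"
  assumes "t \<longlonglongrightarrow> 0"
  shows "(\<lambda>n. (\<Sum>m<n. t m) / real n) \<longlonglongrightarrow> 0"
proof (rule LIMSEQ_I)
  fix r :: real assume r: "r > 0"
  obtain N where N: "\<And>m. m \<ge> N \<Longrightarrow> \<bar>t m\<bar> < r / 2"
    using LIMSEQ_D[OF assms, of "r/2"] r by auto
  define C where "C = (\<Sum>m<N. \<bar>t m\<bar>)"
  have C0: "C \<ge> 0" unfolding C_def by (simp add: sum_nonneg)
  define n0 where "n0 = max (Suc N) (Suc (nat \<lceil>2 * C / r\<rceil>))"
  show "\<exists>no. \<forall>n\<ge>no. norm ((\<Sum>m<n. t m) / real n - 0) < r"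
  proof (intro exI allI impI)
    fix n assume n: "n \<ge> n0"
    then have nN: "n \<ge> N" and npos: "n > 0" unfolding n0_def by auto
    have "Suc (nat \<lceil>2 * C / r\<rceil>) \<le> n" using n unfolding n0_def by auto
    then have "real (Suc (nat \<lceil>2 * C / r\<rceil>)) \<le> real n" by (simp only: of_nat_le_iff)
    then have nC: "2 * C / r < real n" using real_nat_ceiling_ge[of "2 * C / r"] of_nat_Suc[of "nat \<lceil>2 * C / r\<rceil>"] by linarith
    then have "2 * C < real n * r" using pos_divide_less_eq[OF r] by blast
    moreover have "r / 2 * real n = (real n * r) / 2" by simp
    ultimately have nC': "C < r / 2 * real n" by linarith
    have split: "(\<Sum>m<n. t m) = (\<Sum>m<N. t m) + (\<Sum>m\<in>{N..<n}. t m)"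
    proof -
      have "sum t ({..<N} \<union> {N..<n}) = sum t {..<N} + sum t {N..<n}"
        by (rule sum.union_disjoint) auto
      then show ?thesis by (simp only: ivl_disj_un_one(2)[OF nN])
    qed
    have s2: "(\<Sum>m\<in>{N..<n}. \<bar>t m\<bar>) \<le> (\<Sum>m\<in>{N..<n}. r / 2)"
      using N by (intro sum_mono) (auto intro: less_imp_le)
    have s3: "(\<Sum>m\<in>{N..<n}. r / 2) \<le> r / 2 * real n"
      using r nN by (simp add: of_nat_diff)
    have s1: "\<bar>\<Sum>m<n. t m\<bar> \<le> (\<Sum>m<N. \<bar>t m\<bar>) + (\<Sum>m\<in>{N..<n}. \<bar>t m\<bar>)"
      unfolding split using abs_triangle_ineq[of "\<Sum>m<N. t m" "\<Sum>m\<in>{N..<n}. t m"]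
        sum_abs[of t "{..<N}"] sum_abs[of t "{N..<n}"] by linarith
    have "\<bar>\<Sum>m<n. t m\<bar> < r * real n" using s1 s2 s3 nC' unfolding C_def by linarith
    moreover have rn: "real n > 0" using npos by simp
    ultimately have "\<bar>\<Sum>m<n. t m\<bar> / real n < r" by (simp add: pos_divide_less_eq[OF rn])
    then show "norm ((\<Sum>m<n. t m) / real n - 0) < r" by (simp add: abs_divide)
  qed
qed

lemma cesaro:
  fixes s :: "nat \<Rightarrow> real"
  assumes "s \<longlonglongrightarrow> L"
  shows "(\<lambda>n. (\<Sum>m<n. s m) / real n) \<longlonglongrightarrow> L"
proof -
  have "(\<lambda>m. s m - L) \<longlonglongrightarrow> 0" using tendsto_diff[OF assms tendsto_const[of L]] by simp
  note c = cesaro0[OF this]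
  have eq: "(\<Sum>m<n. s m) / real n = (\<Sum>m<n. s m - L) / real n + L" if "n > 0" for n
    using that by (simp add: sum_subtractf field_simps)
  have "(\<lambda>n. (\<Sum>m<n. s m - L) / real n + L) \<longlonglongrightarrow> 0 + L" by (intro tendsto_add c tendsto_const)
  then have "(\<lambda>n. (\<Sum>m<n. s m - L) / real n + L) \<longlonglongrightarrow> L" by simp
  then show ?thesis
  proof (rule Lim_transform_eventually)
    show "\<forall>\<^sub>F n in sequentially. (\<Sum>m<n. s m - L) / real n + L = (\<Sum>m<n. s m) / real n"
      unfolding eventually_sequentially using eq by (intro exI[of _ 1]) auto
  qed
qed

lemma gamma_bound:
  fixes X :: "int \<Rightarrow> 'a \<Rightarrow> 'b::real_normed_vector"
  assumes "prob_space M" "subalgebra M F0" "bilin_norm_le1 A"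
    and "integrable M (\<lambda>\<omega>. A (X 0 \<omega>) (X k \<omega>))"
  shows "ennreal \<bar>\<integral>\<omega>. A (X 0 \<omega>) (X k \<omega>) \<partial>M\<bar> \<le> gamma_coef M F0 X k"
proof -
  interpret prob_space M by fact
  interpret finite_measure_subalgebra M F0 by unfold_locales (rule assms(2))
  show ?thesis unfolding gamma_coef_def
  proof (rule INF_greatest)
    fix Y assume "Y \<in> {Y \<in> borel_measurable M. \<forall>A. bilin_norm_le1 A \<longrightarrow>
               (AE \<omega> in M. ennreal \<bar>real_cond_exp M F0 (\<lambda>\<omega>. A (X 0 \<omega>) (X k \<omega>)) \<omega>\<bar> \<le> Y \<omega>)}"
    then have Y: "AE \<omega> in M. ennreal \<bar>real_cond_exp M F0 (\<lambda>\<omega>. A (X 0 \<omega>) (X k \<omega>)) \<omega>\<bar> \<le> Y \<omega>"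
      using assms(3) by blast
    have "(\<integral>\<omega>. A (X 0 \<omega>) (X k \<omega>) \<partial>M) = (\<integral>\<omega>. real_cond_exp M F0 (\<lambda>\<omega>. A (X 0 \<omega>) (X k \<omega>)) \<omega> \<partial>M)"
      by (rule real_cond_exp_int(2)[OF assms(4), symmetric])
    then have "ennreal \<bar>\<integral>\<omega>. A (X 0 \<omega>) (X k \<omega>) \<partial>M\<bar>
       \<le> (\<integral>\<^sup>+\<omega>. norm (real_cond_exp M F0 (\<lambda>\<omega>. A (X 0 \<omega>) (X k \<omega>)) \<omega>) \<partial>M)"
      using integral_norm_bound_ennreal[OF real_cond_exp_int(1)[OF assms(4)]] by simp
    also have "\<dots> \<le> (\<integral>\<^sup>+\<omega>. Y \<omega> \<partial>M)"
      using Y by (intro nn_integral_mono_AE) auto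
    finally show "ennreal \<bar>\<integral>\<omega>. A (X 0 \<omega>) (X k \<omega>) \<partial>M\<bar> \<le> (\<integral>\<^sup>+\<omega>. Y \<omega> \<partial>M)" .
  qed
qed



theorem mainTheorem2:
  fixes M :: "'a measure" and F0 :: "'a measure" and T :: "'a \<Rightarrow> 'a"
    and X :: "int \<Rightarrow> 'a \<Rightarrow> 'b::{banach, second_countable_topology}"
    and mu :: "'b measure"
  assumes prob: "prob_space M"
    and T_meas: "T \<in> M \<rightarrow>\<^sub>M M" and T_bij: "bij_betw T (space M) (space M)"
    and T_inv_meas: "inv_into (space M) T \<in> M \<rightarrow>\<^sub>M M"
    and T_pres: "distr M M T = M"
    and X_def: "\<And>i \<omega>. \<omega> \<in> space M \<Longrightarrow> X i \<omega> = X 0 (Tpow M T i \<omega>)"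
    and F0_sub: "subalgebra M F0"
    and F0_nondecr: "\<forall>A\<in>sets F0. \<exists>B\<in>sets F0. A = T -` B \<inter> space M"
    and X0_adapted: "X 0 \<in> borel_measurable F0"
    and centered: "integrable M (X 0)" "(\<integral>\<omega>. X 0 \<omega> \<partial>M) = 0"
    and L2: "integrable M (\<lambda>\<omega>. (norm (X 0 \<omega>))\<^sup>2)"
    and gamma_sum: "(\<Sum>k. gamma_coef M F0 X (int k + 1)) < \<infinity>"
    and G_gauss: "gaussian_measure mu"
    and G_cov: "\<And>f g :: 'b \<Rightarrow> real. bounded_linear f \<Longrightarrow> bounded_linear g \<Longrightarrow>
        ((\<lambda>n. \<Sum>k\<in>{- int n..int n}.
             (\<integral>\<omega>. f (X 0 \<omega>) * g (X k \<omega>) \<partial>M) - (\<integral>\<omega>. f (X 0 \<omega>) \<partial>M) * (\<integral>\<omega>. g (X k \<omega>) \<partial>M))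
          \<longlonglongrightarrow> (\<integral>x. f x * g x \<partial>mu) - (\<integral>x. f x \<partial>mu) * (\<integral>x. g x \<partial>mu))"
    and conv: "conv_in_distr M (\<lambda>n \<omega>. (1 / sqrt (real n)) *\<^sub>R (\<Sum>i=1..n. X (int i) \<omega>)) mu"
    and UI: "unif_integrable M (\<lambda>n \<omega>. (norm (\<Sum>i=1..Suc n. X (int i) \<omega>))\<^sup>2 / real (Suc n))"
  shows "\<forall>\<phi> :: 'b \<Rightarrow> 'b \<Rightarrow> real. cont_bilinear_form \<phi> \<longrightarrow> (\<forall>x y. \<phi> x y = \<phi> y x) \<longrightarrow>
     summable (\<lambda>k. \<integral>\<omega>. \<phi> (X 0 \<omega>) (X (int k + 1) \<omega>) \<partial>M) \<and>
     (\<integral>x. \<phi> x x \<partial>mu) = (\<integral>\<omega>. \<phi> (X 0 \<omega>) (X 0 \<omega>) \<partial>M)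
        + 2 * (\<Sum>k. \<integral>\<omega>. \<phi> (X 0 \<omega>) (X (int k + 1) \<omega>) \<partial>M)"
proof (intro allI impI)
  fix \<phi> :: "'b \<Rightarrow> 'b \<Rightarrow> real"
  assume cb: "cont_bilinear_form \<phi>" and sym: "\<forall>x y. \<phi> x y = \<phi> y x"
  interpret bb: bounded_bilinear \<phi> using cb unfolding cont_bilinear_form_def by simp
  interpret M: prob_space M by (rule prob)
  obtain K where K: "K > 0" and Kb: "\<And>a b. norm (\<phi> a b) \<le> norm a * norm b * K"
    using bb.pos_bounded by blast
  have Tn: "Tpow M T (int n) = T ^^ n" for n unfolding Tpow_def by simp
  have Xn: "X (int n) \<omega> = X 0 ((T ^^ n) \<omega>)" if "\<omega> \<in> space M" for n \<omega>
    using X_def[OF that, of "int n"] Tn by simp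
  have X0m[measurable]: "X 0 \<in> borel_measurable M"
    using measurable_from_subalg[OF F0_sub X0_adapted] .
  have Tnm[measurable]: "(T ^^ n) \<in> M \<rightarrow>\<^sub>M M" for n by (rule funpow_meas[OF T_meas])
  have Xm[measurable]: "X (int n) \<in> borel_measurable M" for n
  proof -
    have "(\<lambda>\<omega>. X 0 ((T ^^ n) \<omega>)) \<in> borel_measurable M" by measurable
    then show ?thesis by (rule measurable_cong[THEN iffD1, rotated]) (simp add: Xn)
  qed
  have sqi: "integrable M (\<lambda>\<omega>. (norm (X (int n) \<omega>))\<^sup>2)" for n
  proof -
    have "integrable M (\<lambda>\<omega>. (norm (X 0 ((T ^^ n) \<omega>)))\<^sup>2)"
      using integral_funpow(2)[OF T_meas T_pres, of "\<lambda>\<omega>. (norm (X 0 \<omega>))\<^sup>2" n] L2 by simp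
    then show ?thesis by (rule Bochner_Integration.integrable_cong[THEN iffD1, rotated 2]) (auto simp: Xn)
  qed
  have phic: "continuous_on UNIV (\<lambda>x. \<phi> (fst x) (snd x))"
    by (intro bb.continuous_on continuous_on_fst continuous_on_snd continuous_on_id)
  have phim: "(\<lambda>\<omega>. \<phi> (f \<omega>) (g \<omega>)) \<in> borel_measurable N"
    if "f \<in> borel_measurable N" "g \<in> borel_measurable N" for f g :: "'a \<Rightarrow> 'b" and N
    by (rule borel_measurable_continuous_Pair[OF that phic])
  have phib: "\<bar>\<phi> a b\<bar> \<le> K / 2 * ((norm a)\<^sup>2 + (norm b)\<^sup>2)" for a b
  proof -
    have "\<bar>\<phi> a b\<bar> \<le> norm a * norm b * K" using Kb[of a b] by simp
    moreover have "norm a * norm b \<le> ((norm a)\<^sup>2 + (norm b)\<^sup>2) / 2"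
      using sum_squares_bound[of "norm a" "norm b"] by (simp add: power2_eq_square)
    ultimately show ?thesis using K by (smt (verit, best) mult_right_mono times_divide_eq_left mult.commute)
  qed
  have pairi: "integrable M (\<lambda>\<omega>. \<phi> (X (int i) \<omega>) (X (int j) \<omega>))" for i j
  proof (rule Bochner_Integration.integrable_bound)
    show "integrable M (\<lambda>\<omega>. K / 2 * ((norm (X (int i) \<omega>))\<^sup>2 + (norm (X (int j) \<omega>))\<^sup>2))"
      using sqi by auto
    show "(\<lambda>\<omega>. \<phi> (X (int i) \<omega>) (X (int j) \<omega>)) \<in> borel_measurable M" by (intro phim Xm)
    show "AE \<omega> in M. norm (\<phi> (X (int i) \<omega>) (X (int j) \<omega>)) \<le> norm (K / 2 * ((norm (X (int i) \<omega>))\<^sup>2 + (norm (X (int j) \<omega>))\<^sup>2))"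
      using phib K by (intro AE_I2) (smt (verit) real_norm_def abs_of_nonneg zero_le_power2 divide_nonneg_nonneg mult_nonneg_nonneg)
  qed
  define c where "c = (\<lambda>k::nat. \<integral>\<omega>. \<phi> (X 0 \<omega>) (X (int k) \<omega>) \<partial>M)"
  have stat: "(\<integral>\<omega>. \<phi> (X (int i) \<omega>) (X (int j) \<omega>) \<partial>M) = c (j - i)" if ij: "i \<le> j" for i j
  proof -
    define F where "F = (\<lambda>\<omega>. \<phi> (X 0 \<omega>) (X 0 ((T ^^ (j - i)) \<omega>)))"
    have Fm: "F \<in> borel_measurable M" unfolding F_def by (intro phim) measurable
    have "(\<integral>\<omega>. \<phi> (X (int i) \<omega>) (X (int j) \<omega>) \<partial>M) = (\<integral>\<omega>. F ((T ^^ i) \<omega>) \<partial>M)"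
    proof (rule Bochner_Integration.integral_cong[OF refl])
      fix \<omega> assume w: "\<omega> \<in> space M"
      have "(T ^^ j) \<omega> = (T ^^ (j - i)) ((T ^^ i) \<omega>)"
        using ij by (metis funpow_add le_add_diff_inverse2 comp_apply)
      then show "\<phi> (X (int i) \<omega>) (X (int j) \<omega>) = F ((T ^^ i) \<omega>)"
        unfolding F_def using Xn[OF w] by simp
    qed
    also have "\<dots> = integral\<^sup>L M F" by (rule integral_funpow(1)[OF T_meas T_pres Fm])
    also have "\<dots> = c (j - i)" unfolding c_def F_def
      by (rule Bochner_Integration.integral_cong[OF refl]) (simp add: Xn)
    finally show ?thesis .
  qed
  define D where "D = (\<lambda>i j::nat. c (if i \<le> j then j - i else i - j))"
  have statD: "(\<integral>\<omega>. \<phi> (X (int i) \<omega>) (X (int j) \<omega>) \<partial>M) = D i j" for i j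
  proof (cases "i \<le> j")
    case True then show ?thesis using stat[OF True] by (simp add: D_def)
  next
    case False
    then have "(\<integral>\<omega>. \<phi> (X (int i) \<omega>) (X (int j) \<omega>) \<partial>M) = (\<integral>\<omega>. \<phi> (X (int j) \<omega>) (X (int i) \<omega>) \<partial>M)"
      using sym by simp
    also have "\<dots> = c (i - j)" using stat[of j i] False by simp
    finally show ?thesis using False by (simp add: D_def)
  qed
  define S where "S = (\<lambda>n \<omega>. \<Sum>i=1..n. X (int i) \<omega>)"
  have Sm[measurable]: "S n \<in> borel_measurable M" for n unfolding S_def by measurable
  define Q where "Q = (\<lambda>n. \<integral>\<omega>. \<phi> (S n \<omega>) (S n \<omega>) \<partial>M)"
  have QD: "Q n = (\<Sum>i=1..n. \<Sum>j=1..n. D i j)" for n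
  proof -
    have "Q n = (\<integral>\<omega>. (\<Sum>i=1..n. \<Sum>j=1..n. \<phi> (X (int i) \<omega>) (X (int j) \<omega>)) \<partial>M)"
      unfolding Q_def S_def by (simp add: bb.sum_left bb.sum_right) (subst sum.swap, simp)
    also have "\<dots> = (\<Sum>i=1..n. \<Sum>j=1..n. (\<integral>\<omega>. \<phi> (X (int i) \<omega>) (X (int j) \<omega>) \<partial>M))"
      by (simp add: Bochner_Integration.integral_sum pairi)
    finally show ?thesis by (simp add: statD)
  qed
  define s where "s = (\<lambda>m. \<Sum>k=1..m. c k)"
  have Drow: "(\<Sum>i=1..n. D i (Suc n)) = s n" for n
  proof -
    have "(\<Sum>i=1..n. D i (Suc n)) = (\<Sum>i=1..n. c (Suc n - i))" by (intro sum.cong) (auto simp: D_def)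
    also have "\<dots> = (\<Sum>i=1..n. c i)"
      by (subst sum.atLeastAtMost_rev) (intro sum.cong, auto)
    finally show ?thesis unfolding s_def .
  qed
  have Dcol: "(\<Sum>j=1..n. D (Suc n) j) = s n" for n
    using Drow[of n] by (simp add: D_def)
  have Prec: "(\<Sum>i=1..n. \<Sum>j=1..n. D i j) = real n * c 0 + 2 * (\<Sum>m<n. s m)" for n
  proof (induction n)
    case 0 then show ?case by simp
  next
    case (Suc n)
    have "(\<Sum>i=1..Suc n. \<Sum>j=1..Suc n. D i j) = (\<Sum>i=1..Suc n. (\<Sum>j=1..n. D i j) + D i (Suc n))"
      by simp
    also have "\<dots> = (\<Sum>i=1..n. \<Sum>j=1..n. D i j) + (\<Sum>i=1..n. D i (Suc n)) + (\<Sum>j=1..n. D (Suc n) j) + D (Suc n) (Suc n)"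
      by (simp add: sum.distrib)
    also have "\<dots> = real n * c 0 + 2 * (\<Sum>m<n. s m) + s n + s n + c 0"
      using Suc Drow Dcol by (simp add: D_def)
    finally show ?case by (simp add: algebra_simps)
  qed
  define A where "A = (\<lambda>x y. \<phi> x y / K)"
  have A1: "bilin_norm_le1 A"
    unfolding bilin_norm_le1_def cont_bilinear_form_def
  proof
    show "bounded_bilinear A" unfolding A_def
    proof
      show "\<phi> (a + a') b / K = \<phi> a b / K + \<phi> a' b / K" for a a' b by (simp add: bb.add_left add_divide_distrib)
      show "\<phi> a (b + b') / K = \<phi> a b / K + \<phi> a b' / K" for a b b' by (simp add: bb.add_right add_divide_distrib)
      show "\<phi> (r *\<^sub>R a) b / K = r *\<^sub>R (\<phi> a b / K)" for r a b by (simp add: bb.scaleR_left)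
      show "\<phi> a (r *\<^sub>R b) / K = r *\<^sub>R (\<phi> a b / K)" for r a b by (simp add: bb.scaleR_right)
      show "\<exists>K'. \<forall>a b. norm (\<phi> a b / K) \<le> norm a * norm b * K'"
        using Kb K by (intro exI[of _ 1]) (simp add: divide_le_eq)
    qed
    show "\<forall>x y. \<bar>A x y\<bar> \<le> norm x * norm y"
      using Kb K unfolding A_def by (simp add: divide_le_eq abs_divide)
  qed
  have cg: "ennreal (\<bar>c (Suc k)\<bar> / K) \<le> gamma_coef M F0 X (int k + 1)" for k
  proof -
    have "integrable M (\<lambda>\<omega>. A (X 0 \<omega>) (X (int k + 1) \<omega>))"
      using pairi[of 0 "Suc k"] unfolding A_def by (simp add: add.commute)
    from gamma_bound[OF prob F0_sub A1 this]
    have "ennreal \<bar>\<integral>\<omega>. A (X 0 \<omega>) (X (int k + 1) \<omega>) \<partial>M\<bar> \<le> gamma_coef M F0 X (int k + 1)" .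
    moreover have "(\<integral>\<omega>. A (X 0 \<omega>) (X (int k + 1) \<omega>) \<partial>M) = c (Suc k) / K"
      unfolding A_def c_def by (simp add: add.commute)
    ultimately show ?thesis using K by (simp add: abs_divide)
  qed
  have summ1: "summable (\<lambda>k. \<bar>c (Suc k)\<bar> / K)"
  proof (rule summable_suminf_not_top)
    show "0 \<le> \<bar>c (Suc k)\<bar> / K" for k using K by simp
    have "(\<Sum>k. ennreal (\<bar>c (Suc k)\<bar> / K)) \<le> (\<Sum>k. gamma_coef M F0 X (int k + 1))"
      by (rule suminf_le[OF cg]) auto
    then show "(\<Sum>k. ennreal (\<bar>c (Suc k)\<bar> / K)) \<noteq> \<top>" using gamma_sum by (auto simp: top_unique)
  qed
  have summ: "summable (\<lambda>k. c (Suc k))"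
  proof -
    have "summable (\<lambda>k. K * (\<bar>c (Suc k)\<bar> / K))" by (rule summable_mult[OF summ1])
    then have "summable (\<lambda>k. \<bar>c (Suc k)\<bar>)" using K by simp
    then show ?thesis by (rule summable_rabs_cancel)
  qed
  define L where "L = (\<Sum>k. c (Suc k))"
  have sL: "s \<longlonglongrightarrow> L"
  proof -
    have "s m = (\<Sum>k<m. c (Suc k))" for m unfolding s_def
      by (induction m) (simp_all add: atLeastAtMostSuc_conv add.commute)
    then have "s = (\<lambda>m. \<Sum>k<m. c (Suc k))" by (rule ext)
    then show ?thesis using summable_LIMSEQ[OF summ] unfolding L_def by simp
  qed
  have Qlim: "(\<lambda>n. Q (Suc n) / real (Suc n)) \<longlonglongrightarrow> c 0 + 2 * L"
  proof -
    have "(\<lambda>n. c 0 + 2 * ((\<Sum>m<n. s m) / real n)) \<longlonglongrightarrow> c 0 + 2 * L"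
      by (intro tendsto_intros cesaro sL)
    then have "(\<lambda>n. c 0 + 2 * ((\<Sum>m<Suc n. s m) / real (Suc n))) \<longlonglongrightarrow> c 0 + 2 * L"
      by (rule LIMSEQ_Suc)
    moreover have "Q (Suc n) / real (Suc n) = c 0 + 2 * ((\<Sum>m<Suc n. s m) / real (Suc n))" for n
      unfolding QD Prec by (simp add: field_simps del: of_nat_Suc)
    ultimately show ?thesis by simp
  qed
  have mu_prob: "prob_space mu" and smu: "sets mu = sets borel"
    using G_gauss unfolding gaussian_measure_def by auto
  define Z where "Z = (\<lambda>n \<omega>. (1 / sqrt (real n)) *\<^sub>R (\<Sum>i=1..n. X (int i) \<omega>))"
  have ZS: "Z n \<omega> = (1 / sqrt (real n)) *\<^sub>R S n \<omega>" for n \<omega> unfolding Z_def S_def by simp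
  have qc: "continuous_on UNIV (\<lambda>x. \<phi> x x)"
    by (intro bb.continuous_on continuous_on_id)
  have qb: "\<bar>\<phi> x x\<bar> \<le> K * (norm x)\<^sup>2" for x
    using Kb[of x x] by (simp add: power2_eq_square mult.commute mult.left_commute)
  have WCres: "(\<lambda>n. \<integral>\<omega>. \<phi> (Z (Suc n) \<omega>) (Z (Suc n) \<omega>) \<partial>M) \<longlonglongrightarrow> (\<integral>x. \<phi> x x \<partial>mu)"
  proof (rule wc[OF prob mu_prob smu, where q="\<lambda>x. \<phi> x x", OF _ _ _ qc qb K])
    show "Z (Suc n) \<in> borel_measurable M" for n unfolding Z_def by measurable
    show "\<forall>f::'b\<Rightarrow>real. continuous_on UNIV f \<longrightarrow> bounded (range f) \<longrightarrow>
        ((\<lambda>n. \<integral>\<omega>. f (Z (Suc n) \<omega>) \<partial>M) \<longlonglongrightarrow> (\<integral>x. f x \<partial>mu))"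
    proof (intro allI impI)
      fix f :: "'b \<Rightarrow> real" assume "continuous_on UNIV f" "bounded (range f)"
      then have "(\<lambda>n. \<integral>\<omega>. f (Z n \<omega>) \<partial>M) \<longlonglongrightarrow> (\<integral>x. f x \<partial>mu)"
        using conv unfolding conv_in_distr_def Z_def by blast
      then show "(\<lambda>n. \<integral>\<omega>. f (Z (Suc n) \<omega>) \<partial>M) \<longlonglongrightarrow> (\<integral>x. f x \<partial>mu)" by (rule LIMSEQ_Suc)
    qed
    have eq: "(\<lambda>n \<omega>. (norm (Z (Suc n) \<omega>))\<^sup>2) = (\<lambda>n \<omega>. (norm (\<Sum>i=1..Suc n. X (int i) \<omega>))\<^sup>2 / real (Suc n))"
      unfolding Z_def by (auto simp: power_mult_distrib power_divide simp del: of_nat_Suc)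
    show "unif_integrable M (\<lambda>n \<omega>. (norm (Z (Suc n) \<omega>))\<^sup>2)" unfolding eq by (rule UI)
  qed
  have ZQ: "(\<integral>\<omega>. \<phi> (Z (Suc n) \<omega>) (Z (Suc n) \<omega>) \<partial>M) = Q (Suc n) / real (Suc n)" for n
  proof -
    have "\<phi> (Z (Suc n) \<omega>) (Z (Suc n) \<omega>) = \<phi> (S (Suc n) \<omega>) (S (Suc n) \<omega>) / real (Suc n)" for \<omega>
    proof -
      have "\<phi> (Z (Suc n) \<omega>) (Z (Suc n) \<omega>) = (1 / sqrt (real (Suc n))) * (1 / sqrt (real (Suc n))) * \<phi> (S (Suc n) \<omega>) (S (Suc n) \<omega>)"
        unfolding ZS by (simp add: bb.scaleR_left bb.scaleR_right)
      also have "(1 / sqrt (real (Suc n))) * (1 / sqrt (real (Suc n))) = 1 / real (Suc n)"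
        by (simp del: of_nat_Suc)
      finally show ?thesis by simp
    qed
    then show ?thesis unfolding Q_def by simp
  qed
  have main: "(\<integral>x. \<phi> x x \<partial>mu) = c 0 + 2 * L"
    using LIMSEQ_unique[OF WCres[unfolded ZQ] Qlim] .
  have c0: "c 0 = (\<integral>\<omega>. \<phi> (X 0 \<omega>) (X 0 \<omega>) \<partial>M)" unfolding c_def by simp
  have cS: "c (Suc k) = (\<integral>\<omega>. \<phi> (X 0 \<omega>) (X (int k + 1) \<omega>) \<partial>M)" for k unfolding c_def by (simp add: add.commute)
  show "summable (\<lambda>k. \<integral>\<omega>. \<phi> (X 0 \<omega>) (X (int k + 1) \<omega>) \<partial>M) \<and>
     (\<integral>x. \<phi> x x \<partial>mu) = (\<integral>\<omega>. \<phi> (X 0 \<omega>) (X 0 \<omega>) \<partial>M)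
        + 2 * (\<Sum>k. \<integral>\<omega>. \<phi> (X 0 \<omega>) (X (int k + 1) \<omega>) \<partial>M)"
    using summ main c0 cS unfolding L_def by simp
qed

end
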